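(* Let $n\ge1$. Then $$\min_{1\le i\le n} s\big([(10)^i0(10)^{n-i}]_2\big)=F_{2n+1}+F_{2n-1}.$$
   Context: Stern's sequence $(a(n))_{n\ge0}$: $a(0)=0$, $a(1)=1$, $a(2n)=a(n)$, $a(2n+1)=a(n)+a(n+1)$; $s(n)=a(n+1)$. For a binary string $x$, $[x]_2$ is the integer it represents in base 2; $x^i$ denotes $i$-fold concatenation ($x^0$ empty). $F_n$ are the Fibonacci numbers ($F_0=0,F_1=1,F_n=F_{n-1}+F_{n-2}$). *)

theory Defs
  imports Main "HOL-Number_Theory.Fib"
begin

function stern :: "nat \<Rightarrow> nat" where
  "stern n = (if n = 0 then 0 else if n = 1 then 1
              else if even n then stern (n div 2)
              else stern (n div 2) + stern (n div 2 + 1))"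
  by pat_completeness auto
termination by (relation "measure id") (auto elim!: oddE)

definition stern_s :: "nat \<Rightarrow> nat" where
  "stern_s n = stern (n + 1)"

text \<open>Binary strings as lists of bits, most significant bit first;
  bin_val x is the integer [x]_2.\<close>
fun bin_val_acc :: "nat \<Rightarrow> bool list \<Rightarrow> nat" where
  "bin_val_acc acc [] = acc"
| "bin_val_acc acc (b # bs) = bin_val_acc (2 * acc + (if b then 1 else 0)) bs"

definition bin_val :: "bool list \<Rightarrow> nat" where
  "bin_val x = bin_val_acc 0 x"

definition word_pow :: "bool list \<Rightarrow> nat \<Rightarrow> bool list" where
  "word_pow x i = concat (replicate i x)"

end

theory Submission
  imports Defs
begin

declare stern.simps[simp del]

lemma stern_even: "stern (2*N) = stern N"
  by (cases "N = 0") (simp_all add: stern.simps[of "2*N"])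

lemma stern_odd: "stern (2*N+1) = stern N + stern (N+1)"
proof (cases "N = 0")
  case True then show ?thesis by (simp add: stern.simps)
next
  case False
  have "stern (2*N+1) = (if 2*N+1 = 0 then 0 else if 2*N+1 = 1 then 1
              else if even (2*N+1) then stern ((2*N+1) div 2)
              else stern ((2*N+1) div 2) + stern ((2*N+1) div 2 + 1))" by (rule stern.simps)
  with False show ?thesis by simp
qed

lemma stern_even2: "stern (2*N+2) = stern (N+1)"
  using stern_even[of "N+1"] by simp

fun pstep :: "nat \<times> nat \<Rightarrow> bool list \<Rightarrow> nat \<times> nat" where
  "pstep p [] = p"
| "pstep (x,y) (b # bs) = pstep (if b then (x+y, y) else (x, x+y)) bs"

lemma pstep_stern:
  "(stern (bin_val_acc acc bs), stern (bin_val_acc acc bs + 1)) = pstep (stern acc, stern (acc+1)) bs"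
proof (induction bs arbitrary: acc)
  case Nil then show ?case by simp
next
  case (Cons b bs)
  show ?case
  proof (cases b)
    case True
    have "(stern (2*acc+1), stern (2*acc+1+1)) = (stern acc + stern (acc+1), stern (acc+1))"
      using stern_odd[of acc] stern_even2[of acc] by simp
    with Cons[of "2*acc+1"] True show ?thesis by simp
  next
    case False
    have "(stern (2*acc), stern (2*acc+1)) = (stern acc, stern acc + stern (acc+1))"
      using stern_odd[of acc] stern_even[of acc] by simp
    with Cons[of "2*acc"] False show ?thesis by simp
  qed
qed

lemma pstep_append: "pstep p (xs @ ys) = pstep (pstep p xs) ys"
  by (induction p xs rule: pstep.induct) auto

lemma word_pow_Suc: "word_pow x (Suc m) = x @ word_pow x m"
  by (simp add: word_pow_def)

lemma word_pow_0: "word_pow x 0 = []"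
  by (simp add: word_pow_def)

lemma pstep_pow_Suc:
  "pstep (x,y) (word_pow [True,False] (Suc m)) =
     (x*fib(2*m+1)+y*fib(2*m+2), x*fib(2*m+2)+y*fib(2*m+3))"
proof (induction m arbitrary: x y)
  case 0 then show ?case by (simp add: word_pow_Suc word_pow_0 numeral_eq_Suc)
next
  case (Suc m)
  have e: "fib (2*m+3) = fib(2*m+2) + fib(2*m+1)" "fib (2*m+4) = fib(2*m+3) + fib(2*m+2)"
     "fib (2*m+5) = fib(2*m+4) + fib(2*m+3)"
    by (simp_all add: numeral_eq_Suc)
  have "pstep (x,y) (word_pow [True,False] (Suc (Suc m))) =
     pstep (x+y, x+2*y) (word_pow [True,False] (Suc m))"
    by (simp add: word_pow_Suc[of _ "Suc m"] mult_2 add.assoc)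
  also have "\<dots> = ((x+y)*fib(2*m+1)+(x+2*y)*fib(2*m+2), (x+y)*fib(2*m+2)+(x+2*y)*fib(2*m+3))"
    by (rule Suc.IH)
  also have "\<dots> = (x*fib(2*Suc m+1)+y*fib(2*Suc m+2), x*fib(2*Suc m+2)+y*fib(2*Suc m+3))"
  proof -
    have a: "2*Suc m+1 = 2*m+3" "2*Suc m+2 = 2*m+4" "2*Suc m+3 = 2*m+5" by simp_all
    show ?thesis unfolding a e by (simp add: algebra_simps)
  qed
  finally show ?case .
qed

lemma pstep_pow_snd:
  "snd (pstep (x,y) (word_pow [True,False] k)) = x*fib(2*k)+y*fib(2*k+1)"
proof (cases k)
  case 0 then show ?thesis by (simp add: word_pow_0)
next
  case (Suc m)
  have a: "2*k = 2*m+2" "2*k+1 = 2*m+3" using Suc by simp_all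
  have b: "2*Suc m = 2*m+2" "2*m+2+1 = 2*m+3" by simp_all
  show ?thesis unfolding Suc b using pstep_pow_Suc[of x y m] by (simp only: snd_conv)
qed

lemma value_formula:
  "stern_s (bin_val (word_pow [True, False] (Suc j) @ [False] @ word_pow [True, False] k))
   = (fib(2*j)+fib(2*j+1))*fib(2*k) + (2*fib(2*j)+3*fib(2*j+1))*fib(2*k+1)"
proof -
  let ?w = "word_pow [True, False] (Suc j) @ [False] @ word_pow [True, False] k"
  have "stern_s (bin_val ?w) = snd (pstep (stern 0, stern (0+1)) ?w)"
    using pstep_stern[of 0 ?w] unfolding stern_s_def bin_val_def
    by (metis snd_conv)
  also have "(stern 0, stern (0+1)) = (0,1)" by (simp add: stern.simps)
  also have "snd (pstep (0,1) ?w) = fib(2*j+2)*fib(2*k) + (fib(2*j+2)+fib(2*j+3))*fib(2*k+1)"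
    by (simp add: pstep_append pstep_pow_Suc pstep_pow_snd)
  also have "\<dots> = (fib(2*j)+fib(2*j+1))*fib(2*k) + (2*fib(2*j)+3*fib(2*j+1))*fib(2*k+1)"
  proof -
    have e: "fib (2*j+2) = fib(2*j+1) + fib(2*j)" "fib (2*j+3) = fib(2*j+2) + fib(2*j+1)"
      by (simp_all add: numeral_eq_Suc)
    show ?thesis unfolding e by (simp add: algebra_simps)
  qed
  finally show ?thesis .
qed

lemma key_ineq:
  "fib (2*(j+k+1)+1) + fib (2*(j+k+1)-1) + fib(2*j)*fib(2*k+1)
   = (fib(2*j)+fib(2*j+1))*fib(2*k) + (2*fib(2*j)+3*fib(2*j+1))*fib(2*k+1) + fib(2*j)*fib(2*k)"
proof -
  define A where "A = fib(2*j)"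
  define B where "B = fib(2*j+1)"
  define C where "C = fib(2*k)"
  define D where "D = fib(2*k+1)"
  have f1: "fib (2*j+2*k+1) = D*B + C*A"
    using fib_add[of "2*j" "2*k"] unfolding A_def B_def C_def D_def by simp
  have f2: "fib (2*j+2*k+2) = D*(A+B) + C*B"
    using fib_add[of "2*j+1" "2*k"] unfolding A_def B_def C_def D_def
    by (simp add: numeral_eq_Suc add.commute add.left_commute)
  have f3: "fib (2*j+2*k+3) = fib (2*j+2*k+2) + fib (2*j+2*k+1)"
    by (simp add: numeral_eq_Suc)
  have a: "2*(j+k+1)+1 = 2*j+2*k+3" "2*(j+k+1)-1 = 2*j+2*k+1" by simp_all
  show ?thesis unfolding a f3 f2 f1 A_def[symmetric] B_def[symmetric] C_def[symmetric] D_def[symmetric]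
    by (simp add: algebra_simps)
qed

lemma fib_le_Suc2: "fib (2*k) \<le> fib (2*k+1)"
  by (cases k) (simp_all add: numeral_eq_Suc)

lemma nat_aux: "(a::nat) + p = r + q \<Longrightarrow> p \<le> q \<Longrightarrow> r \<le> a" by linarith

theorem mainTheorem11:
  fixes n :: nat
  assumes "n \<ge> 1"
  shows "Min ((\<lambda>i. stern_s (bin_val (word_pow [True, False] i @ [False] @ word_pow [True, False] (n - i)))) ` {1..n})
         = fib (2 * n + 1) + fib (2 * n - 1)"
proof (rule Min_eqI)
  let ?V = "\<lambda>i. stern_s (bin_val (word_pow [True, False] i @ [False] @ word_pow [True, False] (n - i)))"
  show "finite (?V ` {1..n})" by simp
  have gen: "?V i + fib(2*(i-1))*fib(2*(n-i)) = fib (2 * n + 1) + fib (2 * n - 1) + fib(2*(i-1))*fib(2*(n-i)+1)"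
    if hi: "i \<in> {1..n}" for i
  proof -
    obtain j where j: "i = Suc j" using hi by (cases i) auto
    define k where "k = n - i"
    have n: "n = j+k+1" using hi j k_def by auto
    have e1: "i - 1 = j" "n - i = k" using j k_def by simp_all
    have v: "?V i = (fib(2*j)+fib(2*j+1))*fib(2*k) + (2*fib(2*j)+3*fib(2*j+1))*fib(2*k+1)"
    proof -
      have v0: "?V i = stern_s (bin_val (word_pow [True,False] (Suc j) @ [False] @ word_pow [True,False] k))"
        by (simp only: j k_def)
      show ?thesis unfolding v0 by (rule value_formula)
    qed
    have e2: "fib(2*(n-i)) = fib(2*k)" "fib(2*(n-i)+1) = fib(2*k+1)" by (simp_all only: k_def)
    have w: "fib (2*n+1) + fib (2*n-1) + fib(2*j)*fib(2*k+1)
   = (fib(2*j)+fib(2*j+1))*fib(2*k) + (2*fib(2*j)+3*fib(2*j+1))*fib(2*k+1) + fib(2*j)*fib(2*k)"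
      unfolding n by (rule key_ineq)
    show ?thesis unfolding e1(1) e2 by (simp only: v w)
  qed
  show "y \<ge> fib (2 * n + 1) + fib (2 * n - 1)" if "y \<in> ?V ` {1..n}" for y
  proof -
    obtain i where i: "i \<in> {1..n}" "y = ?V i" using \<open>y \<in> _\<close> by auto
    have "fib(2*(i-1))*fib(2*(n-i)) \<le> fib(2*(i-1))*fib(2*(n-i)+1)"
      by (rule mult_left_mono[OF fib_le_Suc2]) simp
    from nat_aux[OF gen[OF i(1)] this] show ?thesis unfolding i(2) .
  qed
  have "1 \<in> {1..n}" using assms by simp
  have z: "fib(2*(1-1)) = 0" by simp
  from gen[OF \<open>1 \<in> {1..n}\<close>] have v1: "?V 1 = fib (2 * n + 1) + fib (2 * n - 1)"
    unfolding z by (simp only: mult_zero_left add_0_right)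
  show "fib (2 * n + 1) + fib (2 * n - 1) \<in> ?V ` {1..n}"
  proof (rule image_eqI[where x=1])
    show "fib (2 * n + 1) + fib (2 * n - 1) = ?V 1" using v1 by (rule sym)
    show "1 \<in> {1..n}" by fact
  qed
qed

end
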